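(* In the weighted space $L^2(\rho)$ of $2\pi$-periodic functions with inner product $(f,g\rho)=\int_{-\pi}^{\pi}fg\rho\,dx$: (i) the functions $o^k(x)=\sin(kx)-\sin((k-1)x)$, $k=1,2,\dots$, form a complete orthonormal basis of the subspace of odd functions in $L^2(\rho)$; (ii) the functions $e^k(x)=\cos(kx)-\cos((k+1)x)$, $k=0,1,\dots$, form a complete orthonormal basis of the subspace of even functions in $L^2(\rho)$.
   Context: $\rho(x)=\dfrac{1}{2\pi(1-\cos x)}$. *)

theory Defs
  imports "HOL-Analysis.Analysis"
begin

text \<open>The weight rho(x) = 1/(2 pi (1 - cos x)).  (At x = 0 mod 2pi it evaluates to 0
  by Isabelle's division convention; this is a null set.)\<close>
definition rho :: "real \<Rightarrow> real" where
  "rho x = 1 / (2 * pi * (1 - cos x))"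

definition L2rho :: "(real \<Rightarrow> real) set" where
  "L2rho = {f. f \<in> borel_measurable borel \<and> (\<forall>x. f (x + 2 * pi) = f x) \<and>
               set_integrable lborel {-pi..pi} (\<lambda>x. (f x)^2 * rho x)}"

definition ip_rho :: "(real \<Rightarrow> real) \<Rightarrow> (real \<Rightarrow> real) \<Rightarrow> real" where
  "ip_rho f g = (LINT x:{-pi..pi}|lborel. f x * g x * rho x)"

definition odd_fun :: "(real \<Rightarrow> real) \<Rightarrow> bool" where
  "odd_fun f \<longleftrightarrow> (\<forall>x. f (-x) = - f x)"

definition even_fun :: "(real \<Rightarrow> real) \<Rightarrow> bool" where
  "even_fun f \<longleftrightarrow> (\<forall>x. f (-x) = f x)"

definition o_fun :: "nat \<Rightarrow> real \<Rightarrow> real" where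
  "o_fun k x = sin (real k * x) - sin ((real k - 1) * x)"

definition e_fun :: "nat \<Rightarrow> real \<Rightarrow> real" where
  "e_fun k x = cos (real k * x) - cos ((real k + 1) * x)"

definition complete_ONB_rho ::
    "((real \<Rightarrow> real) \<Rightarrow> bool) \<Rightarrow> nat set \<Rightarrow> (nat \<Rightarrow> real \<Rightarrow> real) \<Rightarrow> bool" where
  "complete_ONB_rho P I b \<longleftrightarrow>
     (\<forall>k\<in>I. b k \<in> L2rho \<and> P (b k)) \<and>
     (\<forall>j\<in>I. \<forall>k\<in>I. ip_rho (b j) (b k) = (if j = k then 1 else 0)) \<and>
     (\<forall>f\<in>L2rho. P f \<longrightarrow> (\<forall>\<epsilon>>0. \<exists>F c. finite F \<and> F \<subseteq> I \<and>
        ip_rho (\<lambda>x. f x - (\<Sum>k\<in>F. c k * b k x)) (\<lambda>x. f x - (\<Sum>k\<in>F. c k * b k x)) < \<epsilon>))"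

end

theory Submission
  imports Defs
begin


definition cosR :: "(real \<Rightarrow> real) set" where
  "cosR = {p. \<exists>N a. p = (\<lambda>t. \<Sum>m<N. a m * cos (real m * t))}"

lemma cosR_I: "p = (\<lambda>t. \<Sum>m<N. a m * cos (real m * t)) \<Longrightarrow> p \<in> cosR"
  unfolding cosR_def by blast

lemma cosR_pad:
  assumes "N \<le> N'"
  shows "(\<lambda>t. \<Sum>m<N. a m * cos (real m * t)) = (\<lambda>t. \<Sum>m<N'. (if m < N then a m else 0) * cos (real m * t))"
proof
  fix t
  have "(\<Sum>m<N'. (if m < N then a m else 0) * cos (real m * t)) = (\<Sum>m<N. (if m < N then a m else 0) * cos (real m * t))"
    using assms by (intro sum.mono_neutral_right) auto
  then show "(\<Sum>m<N. a m * cos (real m * t)) = (\<Sum>m<N'. (if m < N then a m else 0) * cos (real m * t))"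
    by simp
qed

lemma cosR_add: assumes "f \<in> cosR" "g \<in> cosR" shows "(\<lambda>x. f x + g x) \<in> cosR"
proof -
  obtain N1 a1 where 1: "f = (\<lambda>t. \<Sum>m<N1. a1 m * cos (real m * t))" using assms(1) cosR_def by blast
  obtain N2 a2 where 2: "g = (\<lambda>t. \<Sum>m<N2. a2 m * cos (real m * t))" using assms(2) cosR_def by blast
  let ?N = "max N1 N2"
  have "f = (\<lambda>t. \<Sum>m<?N. (if m < N1 then a1 m else 0) * cos (real m * t))"
    using 1 cosR_pad[of N1 ?N] by simp
  moreover have "g = (\<lambda>t. \<Sum>m<?N. (if m < N2 then a2 m else 0) * cos (real m * t))"
    using 2 cosR_pad[of N2 ?N] by simp
  ultimately have "(\<lambda>x. f x + g x) = (\<lambda>t. \<Sum>m<?N. ((if m < N1 then a1 m else 0) + (if m < N2 then a2 m else 0)) * cos (real m * t))"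
    by (simp add: sum.distrib distrib_right)
  then show ?thesis by (rule cosR_I)
qed

lemma cosR_scale: assumes "f \<in> cosR" shows "(\<lambda>x. c * f x) \<in> cosR"
proof -
  obtain N1 a1 where 1: "f = (\<lambda>t. \<Sum>m<N1. a1 m * cos (real m * t))" using assms(1) cosR_def by blast
  have "(\<lambda>x. c * f x) = (\<lambda>t. \<Sum>m<N1. (c * a1 m) * cos (real m * t))"
    by (simp add: 1 sum_distrib_left mult.assoc)
  then show ?thesis by (rule cosR_I)
qed

lemma cosR_single: "(\<lambda>t. c * cos (real j * t)) \<in> cosR"
proof -
  have "(\<lambda>t. c * cos (real j * t)) = (\<lambda>t. \<Sum>m<Suc j. (if m = j then c else 0) * cos (real m * t))"
    by (simp add: if_distrib sum.delta cong: if_cong)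
  then show ?thesis by (rule cosR_I)
qed

lemma cosR_zero: "(\<lambda>t. 0) \<in> cosR"
  using cosR_single[of 0 0] by simp

lemma cosR_sum: assumes "finite A" "\<And>i. i \<in> A \<Longrightarrow> f i \<in> cosR"
  shows "(\<lambda>t. \<Sum>i\<in>A. f i t) \<in> cosR"
  using assms
proof (induction A rule: finite_induct)
  case empty then show ?case using cosR_zero by simp
next
  case (insert x F)
  then show ?case using cosR_add[of "f x" "\<lambda>t. \<Sum>i\<in>F. f i t"] by simp
qed

lemma cosR_prod1: "(\<lambda>t. cos (real m * t) * cos (real n * t)) \<in> cosR"
proof -
  have "(\<lambda>t. cos (real m * t) * cos (real n * t)) =
        (\<lambda>t. (1/2) * cos (real (m + n) * t) + (1/2) * cos (real (if m \<le> n then n - m else m - n) * t))"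
  proof
    fix t
    have "cos (real m * t) * cos (real n * t) = (cos (real m * t - real n * t) + cos (real m * t + real n * t)) / 2"
      by (simp add: cos_diff cos_add)
    moreover have "cos (real m * t - real n * t) = cos (real (if m \<le> n then n - m else m - n) * t)"
    proof (cases "m \<le> n")
      case True
      then have "real m * t - real n * t = - (real (n - m) * t)" by (simp add: of_nat_diff algebra_simps)
      then show ?thesis using True by simp
    next
      case False
      then have "real m * t - real n * t = (real (m - n) * t)" by (simp add: of_nat_diff algebra_simps)
      then show ?thesis using False by simp
    qed
    ultimately show "cos (real m * t) * cos (real n * t) = (1/2) * cos (real (m + n) * t) + (1/2) * cos (real (if m \<le> n then n - m else m - n) * t)"
      by (simp add: algebra_simps)
  qed
  then show ?thesis using cosR_add[OF cosR_single cosR_single] by metis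
qed

lemma cosR_mult: assumes "f \<in> cosR" "g \<in> cosR" shows "(\<lambda>x. f x * g x) \<in> cosR"
proof -
  obtain N1 a1 where 1: "f = (\<lambda>t. \<Sum>m<N1. a1 m * cos (real m * t))" using assms(1) cosR_def by blast
  obtain N2 a2 where 2: "g = (\<lambda>t. \<Sum>m<N2. a2 m * cos (real m * t))" using assms(2) cosR_def by blast
  have "(\<lambda>x. f x * g x) = (\<lambda>t. \<Sum>m<N1. \<Sum>n<N2. (a1 m * a2 n) * (cos (real m * t) * cos (real n * t)))"
    by (simp add: 1 2 sum_product algebra_simps)
  moreover have "(\<lambda>t. \<Sum>m<N1. \<Sum>n<N2. (a1 m * a2 n) * (cos (real m * t) * cos (real n * t))) \<in> cosR"
    by (intro cosR_sum cosR_scale cosR_prod1) auto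
  ultimately show ?thesis by simp
qed

lemma cosR_ring: "function_ring_on cosR {0..pi}"
proof
  show "compact {0..pi}" by simp
next
  fix f assume "f \<in> cosR"
  then obtain N1 a1 where 1: "f = (\<lambda>t. \<Sum>m<N1. a1 m * cos (real m * t))" using cosR_def by blast
  show "continuous_on {0..pi} f" unfolding 1 by (intro continuous_intros)
next
  fix f g assume "f \<in> cosR" "g \<in> cosR"
  then show "(\<lambda>x. f x + g x) \<in> cosR" "(\<lambda>x. f x * g x) \<in> cosR" by (auto intro: cosR_add cosR_mult)
next
  fix c show "(\<lambda>_. c) \<in> cosR" using cosR_single[of c 0] by simp
next
  fix x y assume "x \<in> {0..pi}" "y \<in> {0..pi}" "x \<noteq> y"
  then have "cos x \<noteq> cos y" using cos_inj_pi by auto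
  moreover have "(\<lambda>t. 1 * cos (real 1 * t)) \<in> cosR" by (rule cosR_single)
  ultimately show "\<exists>f\<in>cosR. f x \<noteq> f y" by (intro bexI[of _ "\<lambda>t. 1 * cos (real 1 * t)"]) auto
qed



lemma abs_key: "\<bar>a - b\<bar> < e \<Longrightarrow> \<bar>-a - c\<bar> < e \<Longrightarrow> s = (b - c)/2 \<Longrightarrow> \<bar>a - s\<bar> < (e::real)"
  by (simp add: abs_less_iff field_simps)

lemma core_approx:
  assumes u: "continuous_on {0..pi/2} u" and u0: "u (pi/2) = 0" and e: "e > 0"
  shows "\<exists>K b. \<forall>t\<in>{0..pi/2}. \<bar>u t - (\<Sum>k<K. b k * cos (real (2*k+1) * t))\<bar> < e"
proof -
  define v where "v t = (if t \<le> pi/2 then u t else - u (pi - t))" for t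
  have "continuous_on {0..pi} (\<lambda>t. if id t \<le> pi/2 then u t else - u (pi - t))"
  proof (rule continuous_on_cases_le)
    have "{x \<in> {0..pi}. id x \<le> pi / 2} = {0..pi/2}" by auto
    then show "continuous_on {x \<in> {0..pi}. id x \<le> pi / 2} u" using u by simp
    have "continuous_on {x \<in> {0..pi}. pi/2 \<le> id x} (\<lambda>x. pi - x)" by (intro continuous_intros)
    moreover have "(\<lambda>x. pi - x) ` {x \<in> {0..pi}. pi/2 \<le> id x} \<subseteq> {0..pi/2}" by auto
    ultimately have "continuous_on {x \<in> {0..pi}. pi/2 \<le> id x} (u \<circ> (\<lambda>x. pi - x))"
      using continuous_on_compose continuous_on_subset u by blast
    then show "continuous_on {x \<in> {0..pi}. pi/2 \<le> id x} (\<lambda>x. - u (pi - x))"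
      by (intro continuous_intros) (simp add: o_def)
  next
    fix x assume "x \<in> {0..pi}" "id x = pi/2"
    then have x1: "x = pi/2" and x2: "pi - x = pi/2" by simp_all
    show "u x = - u (pi - x)" unfolding x2 unfolding x1 using u0 by linarith
  qed (intro continuous_intros)
  then have vc: "continuous_on {0..pi} v" unfolding v_def by simp
  obtain Q where "Q \<in> cosR" and Q: "\<forall>x\<in>{0..pi}. \<bar>v x - Q x\<bar> < e"
    using function_ring_on.Stone_Weierstrass_basic[OF cosR_ring vc e] by blast
  then obtain N a where QN: "Q = (\<lambda>t. \<Sum>m<N. a m * cos (real m * t))" unfolding cosR_def by blast
  define a' where "a' m = (if m < N then a m else 0)" for m
  have Q2: "Q t = (\<Sum>m<2*N. a' m * cos (real m * t))" for t
    using cosR_pad[of N "2*N" a] unfolding QN a'_def by (simp add: fun_eq_iff)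
  show ?thesis
  proof (intro exI ballI)
    fix t :: real assume t: "t \<in> {0..pi/2}"
    have refl: "cos (real m * (pi - t)) = (-1)^m * cos (real m * t)" for m
      by (simp add: right_diff_distrib cos_diff mult.commute)
    have "(Q t - Q (pi - t)) / 2 = (\<Sum>m<2*N. (a' m * cos (real m * t) - a' m * cos (real m * (pi - t))) / 2)"
      unfolding Q2 sum_divide_distrib[symmetric] sum_subtractf ..
    also have "\<dots> = (\<Sum>m<2*N. if even m then 0 else a' m * cos (real m * t))"
      by (rule sum.cong) (auto simp: refl)
    also have "\<dots> = (\<Sum>k<N. a' (2*k+1) * cos (real (2*k+1) * t))"
      using sum_split_even_odd[of "\<lambda>_. 0" "\<lambda>m. a' m * cos (real m * t)" N] by simp
    finally have eq: "(\<Sum>k<N. a' (2*k+1) * cos (real (2*k+1) * t)) = (Q t - Q (pi - t)) / 2" ..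
    have vt: "v t = u t" using t by (simp add: v_def)
    have vt2: "v (pi - t) = - u t"
    proof (cases "t = pi/2")
      case True
      then have e1: "pi - t = pi/2" by simp
      have "v (pi/2) = u (pi/2)" by (simp add: v_def)
      then show ?thesis unfolding e1 unfolding True using u0 by linarith
    next
      case False then show ?thesis using t by (simp add: v_def)
    qed
    have "\<bar>v t - Q t\<bar> < e" "\<bar>v (pi - t) - Q (pi - t)\<bar> < e" using Q t by auto
    then show "\<bar>u t - (\<Sum>k<N. a' (2*k+1) * cos (real (2*k+1) * t))\<bar> < e"
      using vt vt2 eq abs_key[of "u t" "Q t" e "Q (pi - t)"] by simp
  qed
qed



lemma cos_half_id: "cos (real (2*k+1) * (x/2)) = cos ((real k + 1/2) * x)"
proof -
  have "real (2*k+1) * (x/2) = (real k + 1/2) * x" by (simp add: field_simps)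
  then show ?thesis by (rule arg_cong[where f=cos])
qed

lemma cos_sin_id: "cos (real (2*k+1) * ((pi - x)/2)) = (-1)^k * sin ((real k + 1/2) * x)"
proof -
  have eq: "real (2*k+1) * ((pi - x)/2) = real k * pi + (pi/2 - (real k + 1/2) * x)" by (simp add: field_simps)
  have "cos (real (2*k+1) * ((pi - x)/2)) = cos (real k * pi) * cos (pi/2 - (real k + 1/2) * x)"
    unfolding eq cos_add by simp
  also have "\<dots> = (-1)^k * sin ((real k + 1/2) * x)" by (simp add: cos_diff)
  finally show ?thesis .
qed



definition clp :: "real \<Rightarrow> real \<Rightarrow> real" where
  "clp M y = max (-M) (min M y)"

lemma clp_le: "M \<ge> 0 \<Longrightarrow> \<bar>clp M y\<bar> \<le> M" by (auto simp: clp_def)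
lemma clp_id: "\<bar>y\<bar> \<le> M \<Longrightarrow> clp M y = y" by (auto simp: clp_def)
lemma clp_neg: "M \<ge> 0 \<Longrightarrow> clp M (-y) = - clp M y" by (auto simp: clp_def max_def min_def)
lemma clp_cont: "continuous_on UNIV f \<Longrightarrow> continuous_on UNIV (\<lambda>x. clp M (f x))"
  unfolding clp_def by (intro continuous_intros)
lemma clp_tendsto: "(f \<longlongrightarrow> l) F \<Longrightarrow> ((\<lambda>x. clp M (f x)) \<longlongrightarrow> clp M l) F"
  unfolding clp_def by (intro tendsto_intros)

lemma cont_approx_bounded:
  fixes h :: "real \<Rightarrow> real"
  assumes hm: "h \<in> borel_measurable borel" and hb: "\<And>x. \<bar>h x\<bar> \<le> M" and M: "M \<ge> 0"
    and sym: "\<And>x. h (-x) = s * h x" and s: "s = 1 \<or> s = -1" and e: "e > 0"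
  shows "\<exists>psi. continuous_on UNIV psi \<and> (\<forall>x. psi (-x) = s * psi x) \<and> psi pi = 0 \<and> (\<forall>x. \<bar>psi x\<bar> \<le> M) \<and>
           (LINT x:{-pi..pi}|lborel. (h x - psi x)^2) < e"
proof -
  have ss: "s * s = 1" using s by auto
  have hl: "h \<in> borel_measurable lborel" using hm by simp
  have "h measurable_on UNIV"
    by (rule lebesgue_measurable_imp_measurable_on_real) (auto intro: measurable_completion hl)
  then obtain N \<phi> where N: "negligible N" and \<phi>c: "\<And>n. continuous_on UNIV (\<phi> n)"
      and \<phi>l: "\<And>x. x \<notin> N \<Longrightarrow> (\<lambda>n. \<phi> n x) \<longlonglongrightarrow> h x"
    unfolding measurable_on_def by auto
  define cut where "cut n x = max 0 (min 1 (real n * (pi - \<bar>x\<bar>)))" for n x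
  define \<psi> where "\<psi> n x = clp M ((\<phi> n x + s * \<phi> n (-x))/2) * cut n x" for n x
  have \<phi>m: "continuous_on UNIV (\<lambda>x. \<phi> n (-x))" for n
    using continuous_on_compose[of UNIV uminus "\<phi> n"] \<phi>c[of n] by (simp add: o_def continuous_on_minus continuous_on_id)
  have \<psi>c: "continuous_on UNIV (\<psi> n)" for n
    unfolding \<psi>_def cut_def
    by (intro continuous_intros clp_cont \<phi>c \<phi>m) auto
  have cut_sym: "cut n (-x) = cut n x" for n x by (simp add: cut_def)
  have \<psi>s: "\<psi> n (-x) = s * \<psi> n x" for n x
  proof -
    have e1: "(\<phi> n (-x) + s * \<phi> n (- (-x)))/2 = s * ((\<phi> n x + s * \<phi> n (-x))/2)"
      using ss by (simp add: algebra_simps)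
    have e2: "clp M (s * y) = s * clp M y" for y using s clp_neg[OF M] by auto
    show ?thesis unfolding \<psi>_def cut_sym e1 e2 by simp
  qed
  have \<psi>pi: "\<psi> n pi = 0" for n by (simp add: \<psi>_def cut_def)
  have cut01: "0 \<le> cut n x" "cut n x \<le> 1" for n x by (auto simp: cut_def)
  have \<psi>b: "\<bar>\<psi> n x\<bar> \<le> M" for n x
  proof -
    have "\<bar>\<psi> n x\<bar> = \<bar>clp M ((\<phi> n x + s * \<phi> n (-x))/2)\<bar> * cut n x"
      using cut01 by (simp add: \<psi>_def abs_mult)
    also have "\<dots> \<le> M * 1" using cut01 clp_le[OF M] M by (intro mult_mono) auto
    finally show ?thesis by simp
  qed
  let ?I = "{-pi..pi} :: real set"
  let ?s = "\<lambda>n x. indicator ?I x *\<^sub>R (h x - \<psi> n x)^2"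
  let ?w = "\<lambda>x. indicator ?I x *\<^sub>R (2*M)^2"
  have lim: "(\<lambda>n. integral\<^sup>L lborel (?s n)) \<longlonglongrightarrow> integral\<^sup>L lborel (\<lambda>x::real. 0::real)"
  proof (rule integral_dominated_convergence[where w = ?w])
    show "(\<lambda>x::real. 0::real) \<in> borel_measurable lborel" by simp
    show "?s n \<in> borel_measurable lborel" for n
    proof -
      have [measurable]: "\<psi> n \<in> borel_measurable borel" by (rule borel_measurable_continuous_onI[OF \<psi>c])
      show ?thesis using hm by measurable
    qed
    have "set_integrable lborel ?I (\<lambda>x. (2*M)^2)"
      by (rule borel_integrable_atLeastAtMost') (intro continuous_intros)
    then show "integrable lborel ?w" by (simp add: set_integrable_def)
    show "AE x in lborel. norm (?s n x) \<le> ?w x" for n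
    proof (rule AE_I2)
      fix x
      have "\<bar>h x - \<psi> n x\<bar> \<le> 2*M" using hb[of x] \<psi>b[of n x] by linarith
      then have "(h x - \<psi> n x)^2 \<le> (2*M)^2"
        by (metis abs_ge_zero power2_abs power_mono)
      then show "norm (?s n x) \<le> ?w x" by (simp split: split_indicator)
    qed
    define B where "B = N \<union> uminus ` N \<union> {-pi, pi}"
    have "negligible (uminus ` N)"
      by (rule negligible_differentiable_image_negligible[OF _ N]) (auto intro!: derivative_intros)
    then have "negligible B" unfolding B_def using N by (simp add: negligible_Un)
    then have Bnull: "B \<in> null_sets lebesgue" by (simp add: negligible_iff_null_sets)
    have conv: "(\<lambda>n. ?s n x) \<longlonglongrightarrow> 0" if xB: "x \<notin> B" for x
    proof (cases "x \<in> ?I")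
      case False then show ?thesis by simp
    next
      case True
      then have xlt: "\<bar>x\<bar> < pi" using xB unfolding B_def by auto
      have "x \<notin> N" "-x \<notin> N" using xB unfolding B_def by (auto simp: image_iff)
      then have l1: "(\<lambda>n. \<phi> n x) \<longlonglongrightarrow> h x" and l2: "(\<lambda>n. \<phi> n (-x)) \<longlonglongrightarrow> s * h x"
        using \<phi>l[of x] \<phi>l[of "-x"] sym[of x] by auto
      have "(\<lambda>n. (\<phi> n x + s * \<phi> n (-x))/2) \<longlonglongrightarrow> (h x + s * (s * h x))/2"
        by (intro tendsto_intros l1 l2) auto
      moreover have "(h x + s * (s * h x))/2 = h x" using ss by (simp add: mult.assoc[symmetric])
      ultimately have l3: "(\<lambda>n. clp M ((\<phi> n x + s * \<phi> n (-x))/2)) \<longlonglongrightarrow> clp M (h x)"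
        using clp_tendsto by metis
      have "eventually (\<lambda>n. cut n x = 1) sequentially"
      proof (rule eventually_sequentiallyI[of "nat \<lceil>1/(pi - \<bar>x\<bar>)\<rceil>"])
        fix n assume "nat \<lceil>1/(pi - \<bar>x\<bar>)\<rceil> \<le> n"
        then have "1/(pi - \<bar>x\<bar>) \<le> real n" by linarith
        then have "1 \<le> real n * (pi - \<bar>x\<bar>)" using xlt by (simp add: field_simps)
        then show "cut n x = 1" by (simp add: cut_def)
      qed
      then have l4: "(\<lambda>n. cut n x) \<longlonglongrightarrow> 1" by (rule tendsto_eventually)
      have "(\<lambda>n. \<psi> n x) \<longlonglongrightarrow> clp M (h x) * 1"
        unfolding \<psi>_def by (intro tendsto_intros l3 l4)
      then have "(\<lambda>n. \<psi> n x) \<longlonglongrightarrow> h x" using clp_id[OF hb] by simp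
      then have "(\<lambda>n. (h x - \<psi> n x)^2) \<longlonglongrightarrow> (h x - h x)^2" by (intro tendsto_intros)
      then show ?thesis using True by simp
    qed
    have "AE x in lebesgue. (\<lambda>n. ?s n x) \<longlonglongrightarrow> 0"
      by (rule AE_I'[OF Bnull]) (use conv in auto)
    then show "AE x in lborel. (\<lambda>n. ?s n x) \<longlonglongrightarrow> 0" by (simp add: AE_completion_iff)
  qed
  then have "(\<lambda>n. LINT x:?I|lborel. (h x - \<psi> n x)^2) \<longlonglongrightarrow> 0"
    by (simp add: set_lebesgue_integral_def)
  from order_tendstoD(2)[OF this e] obtain n0 where n0: "(LINT x:?I|lborel. (h x - \<psi> n0 x)^2) < e"
    unfolding eventually_sequentially by blast
  show ?thesis
    by (rule exI[of _ "\<psi> n0"]) (use n0 \<psi>c \<psi>s \<psi>pi \<psi>b in auto)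
qed

lemma clp_diff: "M \<ge> 0 \<Longrightarrow> \<bar>y - clp M y\<bar> \<le> \<bar>y\<bar>" by (auto simp: clp_def)
lemma clp_meas[measurable]: "f \<in> borel_measurable M' \<Longrightarrow> (\<lambda>x. clp M (f x)) \<in> borel_measurable M'"
  unfolding clp_def by (intro borel_measurable_max borel_measurable_min borel_measurable_uminus borel_measurable_const)

lemma trunc_approx:
  fixes g :: "real \<Rightarrow> real"
  assumes gm: "g \<in> borel_measurable borel" and A: "A \<in> sets borel"
    and gi: "set_integrable lborel A (\<lambda>x. (g x)^2)" and e: "e > 0"
  shows "\<exists>M>0. (LINT x:A|lborel. (g x - clp M (g x))^2) < e"
proof -
  let ?s = "\<lambda>n x. indicator A x *\<^sub>R (g x - clp (real n) (g x))^2"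
  have lim: "(\<lambda>n. integral\<^sup>L lborel (?s n)) \<longlonglongrightarrow> integral\<^sup>L lborel (\<lambda>x::real. 0::real)"
  proof (rule integral_dominated_convergence[where w = "\<lambda>x. indicator A x *\<^sub>R (g x)^2" and s = ?s and f = "\<lambda>x. 0" and M = lborel])
    show "(\<lambda>x::real. 0::real) \<in> borel_measurable lborel" by simp
    show "?s n \<in> borel_measurable lborel" for n using gm A by measurable
    show "integrable lborel (\<lambda>x. indicator A x *\<^sub>R (g x)^2)" using gi by (simp add: set_integrable_def)
    show "AE x in lborel. (\<lambda>n. ?s n x) \<longlonglongrightarrow> 0"
    proof (rule AE_I2)
      fix x
      have "eventually (\<lambda>n. ?s n x = 0) sequentially"
      proof (rule eventually_sequentiallyI[of "nat \<lceil>\<bar>g x\<bar>\<rceil>"])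
        fix n assume "nat \<lceil>\<bar>g x\<bar>\<rceil> \<le> n"
        then have "\<bar>g x\<bar> \<le> real n" by linarith
        then show "?s n x = 0" by (simp add: clp_id)
      qed
      then show "(\<lambda>n. ?s n x) \<longlonglongrightarrow> 0" by (rule tendsto_eventually)
    qed
    show "AE x in lborel. norm (?s n x) \<le> indicator A x *\<^sub>R (g x)^2" for n
    proof (rule AE_I2)
      fix x
      have "\<bar>g x - clp (real n) (g x)\<bar> \<le> \<bar>g x\<bar>" by (rule clp_diff) simp
      then have "(g x - clp (real n) (g x))^2 \<le> (g x)^2"
        by (metis abs_ge_zero power2_abs power_mono)
      then show "norm (?s n x) \<le> indicator A x *\<^sub>R (g x)^2" by (simp split: split_indicator)
    qed
  qed
  then have "(\<lambda>n. LINT x:A|lborel. (g x - clp (real n) (g x))^2) \<longlonglongrightarrow> 0"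
    by (simp add: set_lebesgue_integral_def)
  from order_tendstoD(2)[OF this e] obtain n0 where n0: "\<And>n. n \<ge> n0 \<Longrightarrow> (LINT x:A|lborel. (g x - clp (real n) (g x))^2) < e"
    unfolding eventually_sequentially by blast
  show ?thesis
    by (rule exI[of _ "real (Suc n0)"]) (use n0[of "Suc n0"] in auto)
qed



lemma approx_cos_half:
  assumes c: "continuous_on {-pi..pi} psi" and ev: "\<And>x. psi (-x) = psi x" and p0: "psi pi = 0" and e: "e > 0"
  shows "\<exists>K b. \<forall>x\<in>{-pi..pi}. \<bar>psi x - (\<Sum>k<K. b k * cos ((real k + 1/2) * x))\<bar> < e"
proof -
  define u where "u t = psi (2 * t)" for t
  have "continuous_on {0..pi/2} (psi \<circ> (\<lambda>t. 2 * t))"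
    by (rule continuous_on_compose) (auto intro!: continuous_intros continuous_on_subset[OF c])
  then have uc: "continuous_on {0..pi/2} u" unfolding u_def o_def .
  have u0: "u (pi/2) = 0" using p0 by (simp add: u_def)
  obtain K b where Kb: "\<forall>t\<in>{0..pi/2}. \<bar>u t - (\<Sum>k<K. b k * cos (real (2*k+1) * t))\<bar> < e"
    using core_approx[OF uc u0 e] by blast
  have pos: "\<bar>psi x - (\<Sum>k<K. b k * cos ((real k + 1/2) * x))\<bar> < e" if x: "x \<in> {0..pi}" for x
  proof -
    have "x/2 \<in> {0..pi/2}" using x by auto
    then have "\<bar>u (x/2) - (\<Sum>k<K. b k * cos (real (2*k+1) * (x/2)))\<bar> < e" using Kb by blast
    then show ?thesis unfolding u_def cos_half_id by simp
  qed
  show ?thesis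
  proof (intro exI ballI)
    fix x :: real assume x: "x \<in> {-pi..pi}"
    show "\<bar>psi x - (\<Sum>k<K. b k * cos ((real k + 1/2) * x))\<bar> < e"
    proof (cases "x \<ge> 0")
      case True then show ?thesis using x pos by auto
    next
      case False
      then have "-x \<in> {0..pi}" using x by auto
      from pos[OF this] show ?thesis using ev[of x] by simp
    qed
  qed
qed

lemma approx_sin_half:
  assumes c: "continuous_on {-pi..pi} psi" and od: "\<And>x. psi (-x) = - psi x" and e: "e > 0"
  shows "\<exists>K b. \<forall>x\<in>{-pi..pi}. \<bar>psi x - (\<Sum>k<K. b k * sin ((real k + 1/2) * x))\<bar> < e"
proof -
  define u where "u t = psi (pi - 2 * t)" for t
  have "continuous_on {0..pi/2} (psi \<circ> (\<lambda>t. pi - 2 * t))"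
    by (rule continuous_on_compose) (auto intro!: continuous_intros continuous_on_subset[OF c])
  then have uc: "continuous_on {0..pi/2} u" unfolding u_def o_def .
  have "psi 0 = 0" using od[of 0] by simp
  then have u0: "u (pi/2) = 0" by (simp add: u_def)
  obtain K b where Kb: "\<forall>t\<in>{0..pi/2}. \<bar>u t - (\<Sum>k<K. b k * cos (real (2*k+1) * t))\<bar> < e"
    using core_approx[OF uc u0 e] by blast
  have pos: "\<bar>psi x - (\<Sum>k<K. (b k * (-1)^k) * sin ((real k + 1/2) * x))\<bar> < e" if x: "x \<in> {0..pi}" for x
  proof -
    have "(pi - x)/2 \<in> {0..pi/2}" using x by auto
    then have "\<bar>u ((pi - x)/2) - (\<Sum>k<K. b k * cos (real (2*k+1) * ((pi - x)/2)))\<bar> < e" using Kb by blast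
    then have "\<bar>psi (pi - 2 * ((pi - x)/2)) - (\<Sum>k<K. b k * ((-1)^k * sin ((real k + 1/2) * x)))\<bar> < e"
      unfolding u_def cos_sin_id .
    moreover have eqx: "pi - 2 * ((pi - x)/2) = x" by (simp add: field_simps)
    ultimately show ?thesis unfolding eqx by (simp add: mult.assoc)
  qed
  show ?thesis
  proof (intro exI ballI)
    fix x :: real assume x: "x \<in> {-pi..pi}"
    show "\<bar>psi x - (\<Sum>k<K. (b k * (-1)^k) * sin ((real k + 1/2) * x))\<bar> < e"
    proof (cases "x \<ge> 0")
      case True then show ?thesis using x pos by auto
    next
      case False
      then have "-x \<in> {0..pi}" using x by auto
      from pos[OF this] have "\<bar>- psi x + (\<Sum>k<K. (b k * (-1)^k) * sin ((real k + 1/2) * x))\<bar> < e"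
        using od[of x] by (simp add: sum_negf)
      then show ?thesis by (simp add: abs_minus_commute)
    qed
  qed
qed



lemma sq_tri: "((a::real) - c)^2 \<le> 2 * (a - b)^2 + 2 * (b - c)^2"
proof -
  have "0 \<le> (a - 2*b + c)^2" by simp
  then show ?thesis by (simp add: power2_eq_square algebra_simps)
qed

lemma sb_meas: fixes f :: "real \<Rightarrow> real" assumes "f \<in> borel_measurable borel"
  shows "set_borel_measurable lborel {-pi..pi::real} f"
  unfolding set_borel_measurable_def using assms
  by (intro borel_measurable_scaleR borel_measurable_indicator) auto

lemma L2_cont_approx:
  fixes g :: "real \<Rightarrow> real"
  assumes gm: "g \<in> borel_measurable borel" and gi: "set_integrable lborel {-pi..pi} (\<lambda>x. (g x)^2)"
    and sym: "\<And>x. g (-x) = s * g x" and s: "s = 1 \<or> s = -1" and e: "e > 0"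
  shows "\<exists>psi. continuous_on UNIV psi \<and> (\<forall>x. psi (-x) = s * psi x) \<and> psi pi = 0 \<and>
          set_integrable lborel {-pi..pi} (\<lambda>x. (g x - psi x)^2) \<and>
          (LINT x:{-pi..pi}|lborel. (g x - psi x)^2) < e"
proof -
  let ?I = "{-pi..pi} :: real set"
  obtain M where M: "M > 0" and Mt: "(LINT x:?I|lborel. (g x - clp M (g x))^2) < e/4"
    using trunc_approx[OF gm _ gi, of "e/4"] e by auto
  define h where "h x = clp M (g x)" for x
  have hm: "h \<in> borel_measurable borel" unfolding h_def using gm by measurable
  have hb: "\<bar>h x\<bar> \<le> M" for x unfolding h_def using M by (simp add: clp_le)
  have hs: "h (-x) = s * h x" for x
    unfolding h_def sym using s clp_neg[of M] M by auto
  obtain psi where pc: "continuous_on UNIV psi" and ps: "\<forall>x. psi (-x) = s * psi x" and pp: "psi pi = 0"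
     and pb: "\<forall>x. \<bar>psi x\<bar> \<le> M" and pt: "(LINT x:?I|lborel. (h x - psi x)^2) < e/4"
    using cont_approx_bounded[OF hm hb _ hs s, of "e/4"] M e by auto
  have pm: "psi \<in> borel_measurable borel" by (rule borel_measurable_continuous_onI[OF pc])
  have i1: "set_integrable lborel ?I (\<lambda>x. (g x - h x)^2)"
  proof (rule set_integrable_bound[OF gi])
    show "set_borel_measurable lborel ?I (\<lambda>x. (g x - h x)^2)" by (rule sb_meas) (use gm hm in measurable)
    show "AE x in lborel. x \<in> ?I \<longrightarrow> norm ((g x - h x)^2) \<le> norm ((g x)^2)"
    proof (rule AE_I2, rule impI)
      fix x
      have "\<bar>g x - h x\<bar> \<le> \<bar>g x\<bar>" unfolding h_def using M by (simp add: clp_diff)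
      then have "(g x - h x)^2 \<le> (g x)^2" by (metis abs_ge_zero power2_abs power_mono)
      then show "norm ((g x - h x)^2) \<le> norm ((g x)^2)" by simp
    qed
  qed
  have ic: "set_integrable lborel ?I (\<lambda>x. (2*M)^2)"
    by (rule borel_integrable_atLeastAtMost') (intro continuous_intros)
  have i2: "set_integrable lborel ?I (\<lambda>x. (h x - psi x)^2)"
  proof (rule set_integrable_bound[OF ic])
    show "set_borel_measurable lborel ?I (\<lambda>x. (h x - psi x)^2)" by (rule sb_meas) (use pm hm in measurable)
    show "AE x in lborel. x \<in> ?I \<longrightarrow> norm ((h x - psi x)^2) \<le> norm ((2*M)^2)"
    proof (rule AE_I2, rule impI)
      fix x
      have "\<bar>h x - psi x\<bar> \<le> 2*M" using hb[of x] pb by (smt (verit))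
      then have "(h x - psi x)^2 \<le> (2*M)^2" by (metis abs_ge_zero power2_abs power_mono)
      then show "norm ((h x - psi x)^2) \<le> norm ((2*M)^2)" by simp
    qed
  qed
  have i12: "set_integrable lborel ?I (\<lambda>x. 2 * (g x - h x)^2 + 2 * (h x - psi x)^2)"
    using i1 i2 by (intro set_integral_add set_integrable_mult_right)
  have i3: "set_integrable lborel ?I (\<lambda>x. (g x - psi x)^2)"
  proof (rule set_integrable_bound[OF i12])
    show "set_borel_measurable lborel ?I (\<lambda>x. (g x - psi x)^2)" by (rule sb_meas) (use pm gm in measurable)
    show "AE x in lborel. x \<in> ?I \<longrightarrow> norm ((g x - psi x)^2) \<le> norm (2 * (g x - h x)^2 + 2 * (h x - psi x)^2)"
      using sq_tri by (intro AE_I2 impI) (simp add: abs_of_nonneg)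
  qed
  have "(LINT x:?I|lborel. (g x - psi x)^2) \<le> (LINT x:?I|lborel. 2 * (g x - h x)^2 + 2 * (h x - psi x)^2)"
    using i3 i12 sq_tri by (intro set_integral_mono) auto
  also have "\<dots> = 2 * (LINT x:?I|lborel. (g x - h x)^2) + 2 * (LINT x:?I|lborel. (h x - psi x)^2)"
    using i1 i2 by (simp add: set_integral_add)
  also have "\<dots> < e" using Mt pt unfolding h_def by simp
  finally show ?thesis using pc ps pp i3 by blast
qed



lemma ae0_cong:
  fixes F G :: "real \<Rightarrow> real"
  assumes Fm: "F \<in> borel_measurable borel" and Gm: "G \<in> borel_measurable borel"
    and eq: "\<And>x. x \<in> {-pi..pi} \<Longrightarrow> x \<noteq> 0 \<Longrightarrow> F x = G x"
  shows "set_integrable lborel {-pi..pi} F \<longleftrightarrow> set_integrable lborel {-pi..pi} G"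
    and "(LINT x:{-pi..pi}|lborel. F x) = (LINT x:{-pi..pi}|lborel. G x)"
proof -
  have ae: "AE x in lborel. indicator {-pi..pi} x *\<^sub>R F x = indicator {-pi..pi} x *\<^sub>R G x"
    using AE_lborel_singleton[of "0::real"] by eventually_elim (auto simp: eq split: split_indicator)
  have m1: "(\<lambda>x. indicator {-pi..pi} x *\<^sub>R F x) \<in> borel_measurable lborel"
    using Fm by (intro borel_measurable_scaleR borel_measurable_indicator) auto
  have m2: "(\<lambda>x. indicator {-pi..pi} x *\<^sub>R G x) \<in> borel_measurable lborel"
    using Gm by (intro borel_measurable_scaleR borel_measurable_indicator) auto
  show "set_integrable lborel {-pi..pi} F \<longleftrightarrow> set_integrable lborel {-pi..pi} G"
    unfolding set_integrable_def by (rule integrable_cong_AE[OF m1 m2 ae])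
  show "(LINT x:{-pi..pi}|lborel. F x) = (LINT x:{-pi..pi}|lborel. G x)"
    unfolding set_lebesgue_integral_def by (rule integral_cong_AE[OF m1 m2 ae])
qed

lemma int_cos:
  assumes c: "c \<in> \<int>"
  shows "(LINT x:{-pi..pi}|lborel. cos (c * x)) = (if c = 0 then 2*pi else 0)"
proof -
  have "(LINT x:{-pi..pi}|lborel. cos (c * x)) = integral\<^sup>L lborel (\<lambda>x. cos (c * x) * indicator {-pi..pi} x)"
    by (simp add: set_lebesgue_integral_def mult.commute)
  also have "\<dots> = (if c = 0 then 2*pi else 0)"
  proof (cases "c = 0")
    case True
    have "integral\<^sup>L lborel (\<lambda>x. cos (c * x) * indicator {-pi..pi} x) = pi - (-pi)"
      by (rule integral_FTC_Icc_real[where F = "\<lambda>x. x"]) (auto simp: True intro!: derivative_eq_intros)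
    then show ?thesis using True by simp
  next
    case False
    have "integral\<^sup>L lborel (\<lambda>x. cos (c * x) * indicator {-pi..pi} x) = sin (c * pi) / c - sin (c * (-pi)) / c"
      by (rule integral_FTC_Icc_real[where F = "\<lambda>x. sin (c * x) / c"]) (auto simp: False intro!: derivative_eq_intros continuous_intros)
    moreover have "sin (c * pi) = 0" using c by (simp add: sin_times_pi_eq_0)
    ultimately show ?thesis using False by simp
  qed
  finally show ?thesis .
qed

lemma sin_half_nz: "x \<in> {-pi..pi} \<Longrightarrow> x \<noteq> 0 \<Longrightarrow> sin (x/2) \<noteq> 0"
proof -
  assume x: "x \<in> {-pi..pi}" "x \<noteq> 0"
  show ?thesis
  proof (cases "x > 0")
    case True then show ?thesis using x sin_gt_zero[of "x/2"] by auto
  next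
    case False
    then have "0 < -x/2" "-x/2 < pi" using x by auto
    then have "sin (-x/2) > 0" by (rule sin_gt_zero)
    then show ?thesis by simp
  qed
qed

lemma rho_eq: "sin (x/2) \<noteq> 0 \<Longrightarrow> rho x = 1 / (4 * pi * (sin (x/2))^2)"
proof -
  have "cos x = 1 - 2 * (sin (x/2))^2" using cos_double_sin[of "x/2"] by simp
  then show ?thesis unfolding rho_def by simp
qed

lemma rho_meas: "rho \<in> borel_measurable borel"
  unfolding rho_def by measurable

lemma o_fun_eq: "o_fun k x = 2 * sin (x/2) * cos ((real k - 1/2) * x)"
proof -
  define a where "a = (real k - 1/2) * x"
  have "real k * x = a + x/2" "(real k - 1) * x = a - x/2" unfolding a_def by (simp_all add: algebra_simps)
  then show ?thesis unfolding o_fun_def a_def[symmetric] by (simp add: sin_add sin_diff)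
qed

lemma e_fun_eq: "e_fun k x = 2 * sin (x/2) * sin ((real k + 1/2) * x)"
proof -
  define a where "a = (real k + 1/2) * x"
  have "real k * x = a - x/2" "(real k + 1) * x = a + x/2" unfolding a_def by (simp_all add: algebra_simps)
  then show ?thesis unfolding e_fun_def a_def[symmetric] by (simp add: cos_add cos_diff)
qed


lemma o_meas: "o_fun k \<in> borel_measurable borel"
  by (rule borel_measurable_continuous_onI) (unfold o_fun_def, intro continuous_intros)

lemma e_meas: "e_fun k \<in> borel_measurable borel"
  by (rule borel_measurable_continuous_onI) (unfold e_fun_def, intro continuous_intros)

lemma o_prod:
  assumes "x \<in> {-pi..pi}" "x \<noteq> 0"
  shows "o_fun j x * o_fun k x * rho x = (cos ((real j - real k) * x) + cos ((real j + real k - 1) * x)) / (2*pi)"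
proof -
  have s: "sin (x/2) \<noteq> 0" using sin_half_nz assms by blast
  define a where "a = (real j - 1/2) * x"
  define b where "b = (real k - 1/2) * x"
  have ab1: "(real j - real k) * x = a - b" and ab2: "(real j + real k - 1) * x = a + b"
    unfolding a_def b_def by (simp_all add: algebra_simps)
  have "o_fun j x * o_fun k x * rho x = (2 * sin (x/2) * cos a) * (2 * sin (x/2) * cos b) / (4 * pi * (sin (x/2))^2)"
    unfolding o_fun_eq rho_eq[OF s] a_def b_def by simp
  also have "\<dots> = cos a * cos b / pi" using s by (simp add: field_simps power2_eq_square)
  also have "\<dots> = (cos (a - b) + cos (a + b)) / (2*pi)" by (simp add: cos_add cos_diff field_simps)
  finally show ?thesis unfolding ab1 ab2 .
qed

lemma e_prod:
  assumes "x \<in> {-pi..pi}" "x \<noteq> 0"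
  shows "e_fun j x * e_fun k x * rho x = (cos ((real j - real k) * x) - cos ((real j + real k + 1) * x)) / (2*pi)"
proof -
  have s: "sin (x/2) \<noteq> 0" using sin_half_nz assms by blast
  define a where "a = (real j + 1/2) * x"
  define b where "b = (real k + 1/2) * x"
  have ab1: "(real j - real k) * x = a - b" and ab2: "(real j + real k + 1) * x = a + b"
    unfolding a_def b_def by (simp_all add: algebra_simps)
  have "e_fun j x * e_fun k x * rho x = (2 * sin (x/2) * sin a) * (2 * sin (x/2) * sin b) / (4 * pi * (sin (x/2))^2)"
    unfolding e_fun_eq rho_eq[OF s] a_def b_def by simp
  also have "\<dots> = sin a * sin b / pi" using s by (simp add: field_simps power2_eq_square)
  also have "\<dots> = (cos (a - b) - cos (a + b)) / (2*pi)" by (simp add: cos_add cos_diff field_simps)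
  finally show ?thesis unfolding ab1 ab2 .
qed

lemma two_cos_int:
  assumes c1: "c1 \<in> \<int>" and c2: "c2 \<in> \<int>" and c2nz: "c2 \<noteq> 0"
  shows "set_integrable lborel {-pi..pi} (\<lambda>x. (cos (c1 * x) + t * cos (c2 * x)) / (2*pi))"
    and "(LINT x:{-pi..pi}|lborel. (cos (c1 * x) + t * cos (c2 * x)) / (2*pi)) = (if c1 = 0 then 1 else 0)"
proof -
  have i1: "set_integrable lborel {-pi..pi} (\<lambda>x. cos (c1 * x))"
    by (rule borel_integrable_atLeastAtMost') (intro continuous_intros)
  have i2: "set_integrable lborel {-pi..pi} (\<lambda>x. t * cos (c2 * x))"
    by (rule borel_integrable_atLeastAtMost') (intro continuous_intros)
  show "set_integrable lborel {-pi..pi} (\<lambda>x. (cos (c1 * x) + t * cos (c2 * x)) / (2*pi))"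
    by (rule borel_integrable_atLeastAtMost') (intro continuous_intros, simp)
  have "(LINT x:{-pi..pi}|lborel. (cos (c1 * x) + t * cos (c2 * x)) / (2*pi))
      = ((LINT x:{-pi..pi}|lborel. cos (c1 * x)) + t * (LINT x:{-pi..pi}|lborel. cos (c2 * x))) / (2*pi)"
    using i1 i2 by (simp add: set_integral_add)
  also have "\<dots> = (if c1 = 0 then 1 else 0)" using int_cos[OF c1] int_cos[OF c2] c2nz by simp
  finally show "(LINT x:{-pi..pi}|lborel. (cos (c1 * x) + t * cos (c2 * x)) / (2*pi)) = (if c1 = 0 then 1 else 0)" .
qed

lemma o_ortho:
  assumes "j \<ge> 1" "k \<ge> 1"
  shows "set_integrable lborel {-pi..pi} (\<lambda>x. o_fun j x * o_fun k x * rho x)"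
    and "ip_rho (o_fun j) (o_fun k) = (if j = k then 1 else 0)"
proof -
  let ?G = "\<lambda>x. (cos ((real j - real k) * x) + 1 * cos ((real j + real k - 1) * x)) / (2*pi)"
  have c1: "real j - real k \<in> \<int>" and c2: "real j + real k - 1 \<in> \<int>" by (auto intro: Ints_diff Ints_add)
  have nz: "real j + real k - 1 \<noteq> 0" using assms by simp
  have m: "(\<lambda>x. o_fun j x * o_fun k x * rho x) \<in> borel_measurable borel"
    using o_meas rho_meas by (intro borel_measurable_times) auto
  have mG: "?G \<in> borel_measurable borel"
    by (rule borel_measurable_continuous_onI) (intro continuous_intros, simp)
  have eq: "o_fun j x * o_fun k x * rho x = ?G x" if "x \<in> {-pi..pi}" "x \<noteq> 0" for x
    using o_prod[OF that] by simp
  show "set_integrable lborel {-pi..pi} (\<lambda>x. o_fun j x * o_fun k x * rho x)"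
    using ae0_cong(1)[OF m mG eq] two_cos_int(1)[OF c1 c2 nz] by blast
  have "ip_rho (o_fun j) (o_fun k) = (LINT x:{-pi..pi}|lborel. ?G x)"
    unfolding ip_rho_def by (rule ae0_cong(2)[OF m mG eq])
  also have "\<dots> = (if real j - real k = 0 then 1 else 0)" by (rule two_cos_int(2)[OF c1 c2 nz])
  also have "\<dots> = (if j = k then 1 else 0)" by simp
  finally show "ip_rho (o_fun j) (o_fun k) = (if j = k then 1 else 0)" .
qed

lemma e_ortho:
  shows "set_integrable lborel {-pi..pi} (\<lambda>x. e_fun j x * e_fun k x * rho x)"
    and "ip_rho (e_fun j) (e_fun k) = (if j = k then 1 else 0)"
proof -
  let ?G = "\<lambda>x. (cos ((real j - real k) * x) + (-1) * cos ((real j + real k + 1) * x)) / (2*pi)"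
  have c1: "real j - real k \<in> \<int>" and c2: "real j + real k + 1 \<in> \<int>" by (auto intro: Ints_diff Ints_add)
  have nz: "real j + real k + 1 \<noteq> 0" by simp
  have m: "(\<lambda>x. e_fun j x * e_fun k x * rho x) \<in> borel_measurable borel"
    using e_meas rho_meas by (intro borel_measurable_times) auto
  have mG: "?G \<in> borel_measurable borel"
    by (rule borel_measurable_continuous_onI) (intro continuous_intros, simp)
  have eq: "e_fun j x * e_fun k x * rho x = ?G x" if "x \<in> {-pi..pi}" "x \<noteq> 0" for x
    using e_prod[OF that] by simp
  show "set_integrable lborel {-pi..pi} (\<lambda>x. e_fun j x * e_fun k x * rho x)"
    using ae0_cong(1)[OF m mG eq] two_cos_int(1)[OF c1 c2 nz] by blast
  have "ip_rho (e_fun j) (e_fun k) = (LINT x:{-pi..pi}|lborel. ?G x)"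
    unfolding ip_rho_def by (rule ae0_cong(2)[OF m mG eq])
  also have "\<dots> = (if real j - real k = 0 then 1 else 0)" by (rule two_cos_int(2)[OF c1 c2 nz])
  also have "\<dots> = (if j = k then 1 else 0)" by simp
  finally show "ip_rho (e_fun j) (e_fun k) = (if j = k then 1 else 0)" .
qed





lemma complete_generic:
  fixes f :: "real \<Rightarrow> real" and T :: "nat \<Rightarrow> real \<Rightarrow> real"
  assumes fL: "f \<in> L2rho" and fs: "\<And>x. f (-x) = - s * f x" and s: "s = 1 \<or> s = -1"
    and Tc: "\<And>k. continuous_on UNIV (T k)"
    and appr: "\<And>psi eta. continuous_on UNIV psi \<Longrightarrow> (\<forall>x. psi (-x) = s * psi x) \<Longrightarrow> psi pi = 0 \<Longrightarrow> eta > 0 \<Longrightarrow>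
                 \<exists>K b. \<forall>x\<in>{-pi..pi}. \<bar>psi x - (\<Sum>k<K. b k * T k x)\<bar> < eta"
    and e: "\<epsilon> > 0"
  shows "\<exists>K b. ip_rho (\<lambda>x. f x - (\<Sum>k<K. b k * (2 * sin (x/2) * T k x))) (\<lambda>x. f x - (\<Sum>k<K. b k * (2 * sin (x/2) * T k x))) < \<epsilon>"
proof -
  let ?I = "{-pi..pi} :: real set"
  have fm: "f \<in> borel_measurable borel" and fi: "set_integrable lborel ?I (\<lambda>x. (f x)^2 * rho x)"
    using fL by (auto simp: L2rho_def)
  define g where "g x = f x / (2 * sin (x/2))" for x
  have gm: "g \<in> borel_measurable borel" unfolding g_def using fm by measurable
  have gs: "g (-x) = s * g x" for x
    unfolding g_def fs by (simp add: divide_simps)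
  have Gm: "(\<lambda>x. pi * ((f x)^2 * rho x)) \<in> borel_measurable borel" using fm rho_meas by measurable
  have g2m: "(\<lambda>x. (g x)^2) \<in> borel_measurable borel" using gm by measurable
  have geq: "(g x)^2 = pi * ((f x)^2 * rho x)" if "x \<in> ?I" "x \<noteq> 0" for x
  proof -
    have sn: "sin (x/2) \<noteq> 0" using sin_half_nz that by blast
    show ?thesis unfolding g_def rho_eq[OF sn] using sn by (simp add: field_simps power2_eq_square)
  qed
  have gi: "set_integrable lborel ?I (\<lambda>x. (g x)^2)"
    using ae0_cong(1)[OF g2m Gm geq] fi by (simp add: set_integrable_mult_right)
  obtain psi where pc: "continuous_on UNIV psi" and ps: "\<forall>x. psi (-x) = s * psi x" and pp: "psi pi = 0"
    and pi1: "set_integrable lborel ?I (\<lambda>x. (g x - psi x)^2)"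
    and pt: "(LINT x:?I|lborel. (g x - psi x)^2) < pi * \<epsilon> / 4"
    using L2_cont_approx[OF gm gi gs s, of "pi * \<epsilon> / 4"] e by auto
  define eta where "eta = min 1 (\<epsilon> / 8)"
  have eta: "eta > 0" "eta \<le> 1" "eta \<le> \<epsilon> / 8" using e by (auto simp: eta_def)
  have eta2: "eta^2 \<le> \<epsilon> / 8"
  proof -
    have "eta^2 \<le> eta * 1" unfolding power2_eq_square using eta by (intro mult_left_mono) auto
    then show ?thesis using eta by simp
  qed
  obtain K b where Kb: "\<forall>x\<in>?I. \<bar>psi x - (\<Sum>k<K. b k * T k x)\<bar> < eta"
    using appr[OF pc ps pp eta(1)] by blast
  define P where "P x = (\<Sum>k<K. b k * T k x)" for x
  have Pc: "continuous_on UNIV P" unfolding P_def by (intro continuous_intros Tc)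
  have Pm: "P \<in> borel_measurable borel" by (rule borel_measurable_continuous_onI[OF Pc])
  have psim: "psi \<in> borel_measurable borel" by (rule borel_measurable_continuous_onI[OF pc])
  have i2: "set_integrable lborel ?I (\<lambda>x. (psi x - P x)^2)"
    by (rule borel_integrable_atLeastAtMost') (intro continuous_intros pc Pc[THEN continuous_on_subset] continuous_on_subset[OF pc], auto)
  have iconst: "set_integrable lborel ?I (\<lambda>x. eta^2)"
    by (rule borel_integrable_atLeastAtMost') (intro continuous_intros)
  have i12: "set_integrable lborel ?I (\<lambda>x. 2 * (g x - psi x)^2 + 2 * (psi x - P x)^2)"
    using pi1 i2 by (intro set_integral_add set_integrable_mult_right)
  have i3: "set_integrable lborel ?I (\<lambda>x. (g x - P x)^2)"
  proof (rule set_integrable_bound[OF i12])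
    show "set_borel_measurable lborel ?I (\<lambda>x. (g x - P x)^2)" by (rule sb_meas) (use gm Pm in measurable)
    show "AE x in lborel. x \<in> ?I \<longrightarrow> norm ((g x - P x)^2) \<le> norm (2 * (g x - psi x)^2 + 2 * (psi x - P x)^2)"
      using sq_tri by (intro AE_I2 impI) (simp add: abs_of_nonneg)
  qed
  have L1: "(LINT x:?I|lborel. (g x - P x)^2) \<le> (LINT x:?I|lborel. 2 * (g x - psi x)^2 + 2 * (psi x - P x)^2)"
    using i3 i12 sq_tri by (intro set_integral_mono) auto
  have L2: "(LINT x:?I|lborel. 2 * (g x - psi x)^2 + 2 * (psi x - P x)^2)
      = 2 * (LINT x:?I|lborel. (g x - psi x)^2) + 2 * (LINT x:?I|lborel. (psi x - P x)^2)"
    using pi1 i2 by (simp add: set_integral_add)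
  have L3: "(LINT x:?I|lborel. (psi x - P x)^2) \<le> (LINT x:?I|lborel. eta^2)"
  proof (rule set_integral_mono[OF i2 iconst])
    fix x assume x: "x \<in> ?I"
    have "\<bar>psi x - P x\<bar> \<le> eta" using Kb x unfolding P_def by (simp add: less_imp_le)
    then show "(psi x - P x)^2 \<le> eta^2" by (metis abs_ge_zero power2_abs power_mono)
  qed
  have "(LINT x:?I|lborel. cos (0 * x)) = 2 * pi" using int_cos[of 0] by simp
  then have one: "(LINT x:?I|lborel. 1) = 2 * pi" by simp
  have L4: "(LINT x:?I|lborel. eta^2) = eta^2 * (2 * pi)"
  proof -
    have "(LINT x:?I|lborel. eta^2 * 1) = eta^2 * (LINT x:?I|lborel. 1)" by (rule set_integral_mult_right)
    then show ?thesis using one by simp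
  qed
  have "(LINT x:?I|lborel. (g x - P x)^2) < pi * \<epsilon>"
  proof -
    have "(LINT x:?I|lborel. (g x - P x)^2) \<le> 2 * (LINT x:?I|lborel. (g x - psi x)^2) + 2 * (eta^2 * (2 * pi))"
      using L1 L2 L3 L4 by linarith
    also have "\<dots> < 2 * (pi * \<epsilon> / 4) + 2 * ((\<epsilon> / 8) * (2 * pi))"
      using pt eta2 pi_gt_zero by (intro add_less_le_mono mult_left_mono mult_right_mono) auto
    also have "\<dots> = pi * \<epsilon>" by (simp add: field_simps)
    finally show ?thesis .
  qed
  define S where "S x = (\<Sum>k<K. b k * (2 * sin (x/2) * T k x))" for x
  have Sm: "S \<in> borel_measurable borel" unfolding S_def
    by (rule borel_measurable_continuous_onI) (intro continuous_intros Tc, auto)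
  have Fm: "(\<lambda>x. (f x - S x) * (f x - S x) * rho x) \<in> borel_measurable borel"
    using fm Sm rho_meas by measurable
  have Gm2: "(\<lambda>x. (g x - P x)^2 / pi) \<in> borel_measurable borel" using gm Pm by measurable
  have eq2: "(f x - S x) * (f x - S x) * rho x = (g x - P x)^2 / pi" if "x \<in> ?I" "x \<noteq> 0" for x
  proof -
    have sn: "sin (x/2) \<noteq> 0" using sin_half_nz that by blast
    have SP: "S x = 2 * sin (x/2) * P x" unfolding S_def P_def sum_distrib_left by (simp add: ac_simps)
    have fg: "f x = 2 * sin (x/2) * g x" unfolding g_def using sn by simp
    show ?thesis unfolding SP fg rho_eq[OF sn] using sn by (simp add: field_simps power2_eq_square)
  qed
  have "ip_rho (\<lambda>x. f x - S x) (\<lambda>x. f x - S x) = (LINT x:?I|lborel. (g x - P x)^2 / pi)"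
    unfolding ip_rho_def by (rule ae0_cong(2)[OF Fm Gm2 eq2])
  also have "\<dots> = (LINT x:?I|lborel. (g x - P x)^2) / pi" by simp
  also have "\<dots> < \<epsilon>" using \<open>(LINT x:?I|lborel. (g x - P x)^2) < pi * \<epsilon>\<close> by (simp add: divide_simps mult.commute)
  finally show ?thesis unfolding S_def by blast
qed


lemma sin_per: "c \<in> \<int> \<Longrightarrow> sin (c * (x + 2 * pi)) = sin (c * x)"
proof -
  assume c: "c \<in> \<int>"
  have "c * (x + 2 * pi) = c * x + 2 * pi * c" by (simp add: algebra_simps)
  then show ?thesis using sin_integer_2pi[OF c] cos_integer_2pi[OF c] by (simp add: sin_add)
qed

lemma cos_per: "c \<in> \<int> \<Longrightarrow> cos (c * (x + 2 * pi)) = cos (c * x)"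
proof -
  assume c: "c \<in> \<int>"
  have "c * (x + 2 * pi) = c * x + 2 * pi * c" by (simp add: algebra_simps)
  then show ?thesis using sin_integer_2pi[OF c] cos_integer_2pi[OF c] by (simp add: cos_add)
qed

lemma o_L2: assumes k1: "k \<ge> 1" shows "o_fun k \<in> L2rho"
proof -
  have "(\<forall>x. o_fun k (x + 2 * pi) = o_fun k x)"
  proof
    fix x
    have "real k \<in> \<int>" "real k - 1 \<in> \<int>" by (auto intro: Ints_diff)
    then show "o_fun k (x + 2 * pi) = o_fun k x" unfolding o_fun_def by (simp add: sin_per)
  qed
  moreover have "set_integrable lborel {-pi..pi} (\<lambda>x. (o_fun k x)^2 * rho x)"
    using o_ortho(1)[of k k] k1 by (simp add: power2_eq_square)
  ultimately show ?thesis unfolding L2rho_def using o_meas by auto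
qed

lemma e_L2: "e_fun k \<in> L2rho"
proof -
  have "(\<forall>x. e_fun k (x + 2 * pi) = e_fun k x)"
  proof
    fix x
    have "real k \<in> \<int>" "real k + 1 \<in> \<int>" by (auto intro: Ints_add)
    then show "e_fun k (x + 2 * pi) = e_fun k x" unfolding e_fun_def by (simp add: cos_per)
  qed
  moreover have "set_integrable lborel {-pi..pi} (\<lambda>x. (e_fun k x)^2 * rho x)"
    using e_ortho(1)[of k k] by (simp add: power2_eq_square)
  ultimately show ?thesis unfolding L2rho_def using e_meas by auto
qed

theorem mainTheorem11:
  shows "complete_ONB_rho odd_fun {1..} o_fun \<and> complete_ONB_rho even_fun {0..} e_fun"
proof
  show "complete_ONB_rho odd_fun {1..} o_fun"
    unfolding complete_ONB_rho_def
  proof (intro conjI ballI allI impI)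
    fix k :: nat assume "k \<in> {1..}"
    show "o_fun k \<in> L2rho" using \<open>k \<in> {1..}\<close> by (intro o_L2) auto
    show "odd_fun (o_fun k)" unfolding odd_fun_def o_fun_def by simp
  next
    fix j k :: nat assume "j \<in> {1..}" "k \<in> {1..}"
    then show "ip_rho (o_fun j) (o_fun k) = (if j = k then 1 else 0)" by (intro o_ortho(2)) auto
  next
    fix f :: "real \<Rightarrow> real" and \<epsilon> :: real
    assume fL: "f \<in> L2rho" and fo: "odd_fun f" and e: "\<epsilon> > 0"
    have fs: "f (-x) = - 1 * f x" for x using fo unfolding odd_fun_def by simp
    have appr: "\<exists>K b. \<forall>x\<in>{-pi..pi}. \<bar>psi x - (\<Sum>k<K. b k * cos ((real k + 1/2) * x))\<bar> < eta"
      if "continuous_on UNIV psi" "\<forall>x. psi (-x) = 1 * psi x" "psi pi = 0" "eta > 0" for psi eta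
      using approx_cos_half[OF continuous_on_subset[OF that(1)] _ that(3) that(4)] that(2) by auto
    obtain K b where Kb: "ip_rho (\<lambda>x. f x - (\<Sum>k<K. b k * (2 * sin (x/2) * cos ((real k + 1/2) * x))))
                                (\<lambda>x. f x - (\<Sum>k<K. b k * (2 * sin (x/2) * cos ((real k + 1/2) * x)))) < \<epsilon>"
    proof -
      have Tc: "\<And>k. continuous_on UNIV (\<lambda>x. cos ((real k + 1/2) * x))" by (intro continuous_intros)
      have s1: "(1::real) = 1 \<or> (1::real) = -1" by simp
      show ?thesis using complete_generic[OF fL fs s1 Tc appr e] that by blast
    qed
    define c where "c k = b (k - 1)" for k
    have sumeq: "(\<Sum>k\<in>Suc ` {..<K}. c k * o_fun k x) = (\<Sum>k<K. b k * (2 * sin (x/2) * cos ((real k + 1/2) * x)))" for x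
    proof -
      have "(\<Sum>k\<in>Suc ` {..<K}. c k * o_fun k x) = (\<Sum>k<K. c (Suc k) * o_fun (Suc k) x)"
        by (subst sum.reindex) auto
      also have "\<dots> = (\<Sum>k<K. b k * (2 * sin (x/2) * cos ((real k + 1/2) * x)))"
      proof (rule sum.cong)
        fix k
        have eqk: "(real (Suc k) - 1/2) * x = (real k + 1/2) * x" by simp
        show "c (Suc k) * o_fun (Suc k) x = b k * (2 * sin (x/2) * cos ((real k + 1/2) * x))"
          unfolding c_def o_fun_eq eqk by simp
      qed simp
      finally show ?thesis .
    qed
    show "\<exists>F c. finite F \<and> F \<subseteq> {1..} \<and>
        ip_rho (\<lambda>x. f x - (\<Sum>k\<in>F. c k * o_fun k x)) (\<lambda>x. f x - (\<Sum>k\<in>F. c k * o_fun k x)) < \<epsilon>"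
    proof (intro exI[of _ "Suc ` {..<K}"] exI[of _ c] conjI)
      show "finite (Suc ` {..<K})" by simp
      show "Suc ` {..<K} \<subseteq> {1..}" by auto
      show "ip_rho (\<lambda>x. f x - (\<Sum>k\<in>Suc ` {..<K}. c k * o_fun k x)) (\<lambda>x. f x - (\<Sum>k\<in>Suc ` {..<K}. c k * o_fun k x)) < \<epsilon>"
        unfolding sumeq by (rule Kb)
    qed
  qed
next
  show "complete_ONB_rho even_fun {0..} e_fun"
    unfolding complete_ONB_rho_def
  proof (intro conjI ballI allI impI)
    fix k :: nat assume "k \<in> {0..}"
    show "e_fun k \<in> L2rho" by (rule e_L2)
    show "even_fun (e_fun k)" unfolding even_fun_def e_fun_def by simp
  next
    fix j k :: nat assume "j \<in> {0..}" "k \<in> {0..}"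
    then show "ip_rho (e_fun j) (e_fun k) = (if j = k then 1 else 0)" by (intro e_ortho(2))
  next
    fix f :: "real \<Rightarrow> real" and \<epsilon> :: real
    assume fL: "f \<in> L2rho" and fo: "even_fun f" and e: "\<epsilon> > 0"
    have fs: "f (-x) = - (-1) * f x" for x using fo unfolding even_fun_def by simp
    have appr: "\<exists>K b. \<forall>x\<in>{-pi..pi}. \<bar>psi x - (\<Sum>k<K. b k * sin ((real k + 1/2) * x))\<bar> < eta"
      if "continuous_on UNIV psi" "\<forall>x. psi (-x) = -1 * psi x" "psi pi = 0" "eta > 0" for psi eta
      using approx_sin_half[OF continuous_on_subset[OF that(1)] _ that(4)] that(2) by auto
    obtain K b where Kb: "ip_rho (\<lambda>x. f x - (\<Sum>k<K. b k * (2 * sin (x/2) * sin ((real k + 1/2) * x))))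
                                (\<lambda>x. f x - (\<Sum>k<K. b k * (2 * sin (x/2) * sin ((real k + 1/2) * x)))) < \<epsilon>"
    proof -
      have Tc: "\<And>k. continuous_on UNIV (\<lambda>x. sin ((real k + 1/2) * x))" by (intro continuous_intros)
      have s1: "(-1::real) = 1 \<or> (-1::real) = -1" by simp
      show ?thesis using complete_generic[OF fL fs s1 Tc appr e] that by blast
    qed
    have sumeq: "(\<Sum>k<K. b k * e_fun k x) = (\<Sum>k<K. b k * (2 * sin (x/2) * sin ((real k + 1/2) * x)))" for x
      unfolding e_fun_eq ..
    show "\<exists>F c. finite F \<and> F \<subseteq> {0..} \<and>
        ip_rho (\<lambda>x. f x - (\<Sum>k\<in>F. c k * e_fun k x)) (\<lambda>x. f x - (\<Sum>k\<in>F. c k * e_fun k x)) < \<epsilon>"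
    proof (intro exI[of _ "{..<K}"] exI[of _ b] conjI)
      show "finite {..<K}" by simp
      show "{..<K} \<subseteq> {0..}" by auto
      show "ip_rho (\<lambda>x. f x - (\<Sum>k<K. b k * e_fun k x)) (\<lambda>x. f x - (\<Sum>k<K. b k * e_fun k x)) < \<epsilon>"
        unfolding sumeq by (rule Kb)
    qed
  qed
qed


end
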